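(* Let $d\geq1$ and $H=(H_0,\ldots,H_d)\in(0,1)\times(0,\frac34)^d$, and set $H_+:=H_1+\cdots+H_d$. For $\kappa,\varepsilon>0$ and $\eta\in\mathbb R^d$ let $$K_{H,\kappa,\varepsilon}(\eta):=\frac{1}{1+|\eta|^{1+2H_0-2\kappa-2\varepsilon}}\prod_{i=1}^d\frac{1}{|\eta_i|^{2H_i-1}}.$$ Assume $\frac{3d}{4}-\frac12<H_0+H_+\leq d-\frac12$. Then for every $\alpha$ with $\max\big(d-\frac12-(H_0+H_+),\frac{d-1}{4}\big)<\alpha<\frac d4$, there exist $\kappa,\varepsilon>0$ such that $$\int_{\mathbb R^d\times\mathbb R^d}\frac{d\eta\,d\tilde\eta}{\{1+|\eta-\tilde\eta|^2\}^{2\alpha}}\,K_{H,\kappa,\varepsilon}(\eta)\,K_{H,\kappa,\varepsilon}(\tilde\eta)<\infty.$$ *)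

theory Defs
  imports "HOL-Analysis.Analysis"
begin

text \<open>The kernel K_{H,kappa,eps}(eta) on R^d, with R^d rendered as real^'n (d = CARD('n)).
  H0 is H_0 and H $ i are H_1..H_d. |eta| is the Euclidean norm.\<close>
definition K_kernel :: "real \<Rightarrow> real^'n \<Rightarrow> real \<Rightarrow> real \<Rightarrow> real^'n \<Rightarrow> real" where
  "K_kernel H0 H \<kappa> \<epsilon> \<eta> =
     (1 / (1 + norm \<eta> powr (1 + 2*H0 - 2*\<kappa> - 2*\<epsilon>))) *
     (\<Prod>i\<in>UNIV. 1 / (\<bar>\<eta> $ i\<bar> powr (2 * H $ i - 1)))"

end

theory Submission
  imports Defs
begin


lemma nn_integral_abs_sym:
  fixes g :: "real \<Rightarrow> ennreal"
  assumes [measurable]: "g \<in> borel_measurable borel"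
  shows "(\<integral>\<^sup>+x. g \<bar>x\<bar> \<partial>lborel) \<le> 2 * (\<integral>\<^sup>+x. indicator {0..} x * g x \<partial>lborel)"
proof -
  have "(\<integral>\<^sup>+x. g \<bar>x\<bar> \<partial>lborel) \<le> (\<integral>\<^sup>+x. indicator {0..} x * g x + indicator {0..} (-x) * g (-x) \<partial>lborel)"
    by (intro nn_integral_mono) (auto simp: indicator_def)
  also have "\<dots> = (\<integral>\<^sup>+x. indicator {0..} x * g x \<partial>lborel) + (\<integral>\<^sup>+x. indicator {0..} (-x) * g (-x) \<partial>lborel)"
    by (intro nn_integral_add) auto
  also have "(\<integral>\<^sup>+x. indicator {0..} (-x) * g (-x) \<partial>lborel) = (\<integral>\<^sup>+x. indicator {0..} x * g x \<partial>distr lborel borel uminus)"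
    by (subst nn_integral_distr) auto
  also have "\<dots> = (\<integral>\<^sup>+x. indicator {0..} x * g x \<partial>lborel)"
    by (simp add: lborel_distr_uminus)
  finally show ?thesis by (simp add: mult_2)
qed

lemma ind_ennreal: "ennreal (indicator A x * f) = indicator A x * ennreal f"
  by (auto simp: indicator_def)

lemma pow_int_finite:
  fixes \<sigma> \<tau> :: real
  assumes s: "\<sigma> > -1" and st: "\<sigma> - \<tau> < -1"
  shows "(\<integral>\<^sup>+x. ennreal (\<bar>x\<bar> powr \<sigma> * (1 + \<bar>x\<bar>) powr (-\<tau>)) \<partial>lborel) < \<infinity>"
proof -
  define c where "c = max 1 (2 powr (-\<tau>))"
  have c1: "c \<ge> 1" unfolding c_def by simp
  have I1: "((\<lambda>x. x powr \<sigma>) has_integral (1 powr (\<sigma>+1) / (\<sigma>+1))) {0..1}"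
    by (rule has_integral_powr_from_0) (use s in auto)
  have I2: "((\<lambda>x. x powr (\<sigma>-\<tau>)) has_integral -(1 powr (\<sigma>-\<tau>+1)) / (\<sigma>-\<tau>+1)) {1..}"
    by (rule has_integral_powr_to_inf) (use st in auto)
  have bound: "ennreal (x powr \<sigma> * (1 + x) powr (-\<tau>))
      \<le> ennreal c * (indicator {0..1} x * ennreal (x powr \<sigma>) + indicator {1..} x * ennreal (x powr (\<sigma>-\<tau>)))"
    if x: "x \<ge> 0" for x :: real
  proof (cases "x \<le> 1")
    case True
    have "(1 + x) powr (-\<tau>) \<le> c"
    proof (cases "\<tau> \<ge> 0")
      case True
      then have "(1 + x) powr (-\<tau>) \<le> (1 + x) powr 0" using x by (intro powr_mono) auto
      then have "(1 + x) powr (-\<tau>) \<le> 1" using x by simp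
      then show ?thesis using c1 by linarith
    next
      case False
      then have "(1 + x) powr (-\<tau>) \<le> 2 powr (-\<tau>)" using x True by (intro powr_mono2) auto
      then show ?thesis unfolding c_def by linarith
    qed
    note cb = this
    have "x powr \<sigma> * (1 + x) powr (-\<tau>) \<le> c * x powr \<sigma>"
      using mult_left_mono[OF cb powr_ge_zero[of x \<sigma>]] by (simp add: mult.commute)
    then have "ennreal (x powr \<sigma> * (1 + x) powr (-\<tau>)) \<le> ennreal (c * x powr \<sigma>)"
      by (rule ennreal_leI)
    also have "\<dots> = ennreal c * (indicator {0..1} x * ennreal (x powr \<sigma>))"
      using True x c1 by (simp add: ennreal_mult)
    also have "\<dots> \<le> ennreal c * (indicator {0..1} x * ennreal (x powr \<sigma>) + indicator {1..} x * ennreal (x powr (\<sigma>-\<tau>)))"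
      by (intro mult_left_mono add_increasing2) auto
    finally show ?thesis .
  next
    case False
    have "(1 + x) powr (-\<tau>) \<le> c * x powr (-\<tau>)"
    proof (cases "\<tau> \<ge> 0")
      case True
      then have "(1 + x) powr (-\<tau>) \<le> x powr (-\<tau>)" using False
        by (intro powr_mono2') auto
      then show ?thesis using c1 False
        using mult_right_mono[of 1 c "x powr (-\<tau>)"] by (simp add: order_trans)
    next
      case nt: False
      then have "(1 + x) powr (-\<tau>) \<le> (2*x) powr (-\<tau>)" using False by (intro powr_mono2) auto
      also have "\<dots> = 2 powr (-\<tau>) * x powr (-\<tau>)" using False by (simp add: powr_mult)
      also have "\<dots> \<le> c * x powr (-\<tau>)" unfolding c_def by (intro mult_right_mono) auto
      finally show ?thesis .
    qed
    then have "x powr \<sigma> * (1 + x) powr (-\<tau>) \<le> c * (x powr \<sigma> * x powr (-\<tau>))"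
      by (metis mult.left_commute mult_left_mono powr_ge_zero)
    also have "x powr \<sigma> * x powr (-\<tau>) = x powr (\<sigma>-\<tau>)" using False by (simp add: powr_add[symmetric])
    finally have "ennreal (x powr \<sigma> * (1 + x) powr (-\<tau>)) \<le> ennreal (c * x powr (\<sigma>-\<tau>))"
      by (rule ennreal_leI)
    also have "\<dots> = ennreal c * (indicator {1..} x * ennreal (x powr (\<sigma>-\<tau>)))"
      using False x c1 by (simp add: ennreal_mult)
    also have "\<dots> \<le> ennreal c * (indicator {0..1} x * ennreal (x powr \<sigma>) + indicator {1..} x * ennreal (x powr (\<sigma>-\<tau>)))"
      by (intro mult_left_mono add_increasing) auto
    finally show ?thesis .
  qed
  have "(\<integral>\<^sup>+x. ennreal (\<bar>x\<bar> powr \<sigma> * (1 + \<bar>x\<bar>) powr (-\<tau>)) \<partial>lborel)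
      \<le> 2 * (\<integral>\<^sup>+x. indicator {0..} x * ennreal (x powr \<sigma> * (1 + x) powr (-\<tau>)) \<partial>lborel)"
    by (rule nn_integral_abs_sym[where g="\<lambda>x. ennreal (x powr \<sigma> * (1 + x) powr (-\<tau>))"]) measurable
  also have "(\<integral>\<^sup>+x. indicator {0..} x * ennreal (x powr \<sigma> * (1 + x) powr (-\<tau>)) \<partial>lborel)
     \<le> (\<integral>\<^sup>+x. ennreal c * (indicator {0..1} x * ennreal (x powr \<sigma>) + indicator {1..} x * ennreal (x powr (\<sigma>-\<tau>))) \<partial>lborel)"
  proof (rule nn_integral_mono)
    fix x :: real
    show "indicator {0..} x * ennreal (x powr \<sigma> * (1 + x) powr (-\<tau>))
     \<le> ennreal c * (indicator {0..1} x * ennreal (x powr \<sigma>) + indicator {1..} x * ennreal (x powr (\<sigma>-\<tau>)))"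
    proof (cases "x \<ge> 0")
      case True then show ?thesis using bound[OF True] by simp
    qed simp
  qed
  also have "\<dots> = ennreal c * ((\<integral>\<^sup>+x. indicator {0..1} x * ennreal (x powr \<sigma>) \<partial>lborel) + (\<integral>\<^sup>+x. indicator {1..} x * ennreal (x powr (\<sigma>-\<tau>)) \<partial>lborel))"
    by (subst nn_integral_cmult) (auto intro!: arg_cong2[where f="(*)"] nn_integral_add)
  also have "(\<integral>\<^sup>+x. indicator {0..1} x * ennreal (x powr \<sigma>) \<partial>lborel) = ennreal (1 powr (\<sigma>+1) / (\<sigma>+1))"
    using nn_integral_has_integral_lebesgue[OF _ I1] by (simp add: ind_ennreal)
  also have "(\<integral>\<^sup>+x. indicator {1..} x * ennreal (x powr (\<sigma>-\<tau>)) \<partial>lborel) = ennreal (-(1 powr (\<sigma>-\<tau>+1)) / (\<sigma>-\<tau>+1))"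
    using nn_integral_has_integral_lebesgue[OF _ I2] by (simp add: ind_ennreal)
  finally have B: "(\<integral>\<^sup>+x. ennreal (\<bar>x\<bar> powr \<sigma> * (1 + \<bar>x\<bar>) powr (-\<tau>)) \<partial>lborel)
     \<le> 2 * (ennreal c * (ennreal (1 powr (\<sigma>+1) / (\<sigma>+1)) + ennreal (-(1 powr (\<sigma>-\<tau>+1)) / (\<sigma>-\<tau>+1))))"
    by (simp add: mult_left_mono)
  have "2 * (ennreal c * (ennreal (1 powr (\<sigma>+1) / (\<sigma>+1)) + ennreal (-(1 powr (\<sigma>-\<tau>+1)) / (\<sigma>-\<tau>+1)))) < \<infinity>"
    by (simp add: ennreal_mult_less_top)
  with B show ?thesis by (rule le_less_trans)
qed


lemma w_le_pow:
  fixes a z :: real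
  assumes "a \<ge> 0" "z \<noteq> 0"
  shows "(1 / (1 + z\<^sup>2)) powr a \<le> \<bar>z\<bar> powr (-2*a)"
proof -
  have "(1 / (1 + z\<^sup>2)) powr a \<le> (1 / z\<^sup>2) powr a"
    using assms by (intro powr_mono2) (auto simp: divide_simps add_pos_nonneg)
  also have "1 / z\<^sup>2 = \<bar>z\<bar> powr (-2)"
    using assms by (simp add: powr_minus_divide)
  also have "(\<bar>z\<bar> powr (-2)) powr a = \<bar>z\<bar> powr (-2*a)"
    by (simp add: powr_powr)
  finally show ?thesis .
qed

lemma w_le_x:
  fixes a x y :: real
  assumes a: "a \<ge> 0" and h: "\<bar>x - y\<bar> \<ge> \<bar>x\<bar>/2"
  shows "(1 / (1 + (x-y)\<^sup>2)) powr a \<le> 8 powr a * (1 + \<bar>x\<bar>) powr (-2*a)"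
proof -
  have x2: "\<bar>x\<bar>\<^sup>2/4 \<le> (x-y)\<^sup>2"
  proof -
    have "(\<bar>x\<bar>/2)\<^sup>2 \<le> \<bar>x - y\<bar>\<^sup>2" using h by (intro power_mono) auto
    then show ?thesis by (simp add: power_divide)
  qed
  have "(1 + \<bar>x\<bar>)\<^sup>2 \<le> 8 * (1 + (x-y)\<^sup>2)"
  proof -
    have e: "(1 + \<bar>x\<bar>)\<^sup>2 = 1 + 2*\<bar>x\<bar> + \<bar>x\<bar>\<^sup>2" by (simp add: power2_eq_square algebra_simps)
    have "0 \<le> (\<bar>x\<bar> - 1)\<^sup>2" by simp
    then have "2*\<bar>x\<bar> \<le> 1 + \<bar>x\<bar>\<^sup>2" by (simp add: power2_eq_square algebra_simps)
    moreover have "8 * (1 + (x-y)\<^sup>2) = 8 + 8*(x-y)\<^sup>2" by simp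
    ultimately show ?thesis using e x2 by linarith
  qed
  then have "1 / (1 + (x-y)\<^sup>2) \<le> 8 / (1 + \<bar>x\<bar>)\<^sup>2"
    by (simp add: divide_simps add_pos_nonneg) 
  then have "(1 / (1 + (x-y)\<^sup>2)) powr a \<le> (8 / (1 + \<bar>x\<bar>)\<^sup>2) powr a"
    using a by (intro powr_mono2) auto
  also have "(8 / (1 + \<bar>x\<bar>)\<^sup>2) = 8 * (1 + \<bar>x\<bar>) powr (-2)"
    by (simp add: powr_minus_divide)
  also have "(8 * (1 + \<bar>x\<bar>) powr (-2)) powr a = 8 powr a * (1 + \<bar>x\<bar>) powr (-2*a)"
    by (simp add: powr_mult powr_powr)
  finally show ?thesis .
qed

lemma caseA:
  fixes a b s x y :: real
  assumes a: "a \<ge> 0" and yx: "\<bar>y\<bar> \<le> \<bar>x\<bar>" and h: "\<bar>x - y\<bar> \<ge> \<bar>x\<bar>/2"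
  shows "(1 / (1 + (x-y)\<^sup>2)) powr a * (\<bar>x\<bar> powr s * (1+\<bar>x\<bar>) powr (-b)) * (\<bar>y\<bar> powr s * (1+\<bar>y\<bar>) powr (-b))
     \<le> 8 powr a * ((\<bar>x\<bar> powr s * (1+\<bar>x\<bar>) powr (-(a+b))) * (\<bar>y\<bar> powr s * (1+\<bar>y\<bar>) powr (-(a+b))))"
proof -
  have "(1 / (1 + (x-y)\<^sup>2)) powr a \<le> 8 powr a * (1 + \<bar>x\<bar>) powr (-2*a)"
    by (rule w_le_x[OF a h])
  also have "(1 + \<bar>x\<bar>) powr (-2*a) = (1 + \<bar>x\<bar>) powr (-a) * (1 + \<bar>x\<bar>) powr (-a)"
    by (simp add: powr_add[symmetric])
  also have "\<dots> \<le> (1 + \<bar>x\<bar>) powr (-a) * (1 + \<bar>y\<bar>) powr (-a)"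
    using a yx by (intro mult_left_mono powr_mono2') auto
  finally have w: "(1 / (1 + (x-y)\<^sup>2)) powr a \<le> 8 powr a * ((1 + \<bar>x\<bar>) powr (-a) * (1 + \<bar>y\<bar>) powr (-a))"
    by (simp add: mult_left_mono)
  have "(1 / (1 + (x-y)\<^sup>2)) powr a * (\<bar>x\<bar> powr s * (1+\<bar>x\<bar>) powr (-b)) * (\<bar>y\<bar> powr s * (1+\<bar>y\<bar>) powr (-b))
     \<le> 8 powr a * ((1 + \<bar>x\<bar>) powr (-a) * (1 + \<bar>y\<bar>) powr (-a)) * (\<bar>x\<bar> powr s * (1+\<bar>x\<bar>) powr (-b)) * (\<bar>y\<bar> powr s * (1+\<bar>y\<bar>) powr (-b))"
    using w by (intro mult_right_mono) auto
  also have "\<dots> = 8 powr a * ((\<bar>x\<bar> powr s * ((1+\<bar>x\<bar>) powr (-a) * (1+\<bar>x\<bar>) powr (-b))) * (\<bar>y\<bar> powr s * ((1+\<bar>y\<bar>) powr (-a) * (1+\<bar>y\<bar>) powr (-b))))"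
    by (simp add: algebra_simps)
  also have "\<dots> = 8 powr a * ((\<bar>x\<bar> powr s * (1+\<bar>x\<bar>) powr (-(a+b))) * (\<bar>y\<bar> powr s * (1+\<bar>y\<bar>) powr (-(a+b))))"
    by (simp add: powr_add[symmetric])
  finally show ?thesis .
qed

lemma caseB:
  fixes b s x y :: real
  assumes b: "b \<ge> 0" and h: "\<bar>x - y\<bar> < \<bar>x\<bar>/2"
  shows "\<bar>y\<bar> powr s * (1+\<bar>y\<bar>) powr (-b) \<le> (2 powr \<bar>s\<bar> * 2 powr b) * (\<bar>x\<bar> powr s * (1+\<bar>x\<bar>) powr (-b))"
proof -
  have y1: "\<bar>y\<bar> \<ge> \<bar>x\<bar>/2" and y2: "\<bar>y\<bar> \<le> 2*\<bar>x\<bar>" and x0: "\<bar>x\<bar> > 0"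
  proof -
    have t1: "\<bar>x\<bar> \<le> \<bar>x-y\<bar> + \<bar>y\<bar>" using abs_triangle_ineq[of "x-y" y] by simp
    have t2: "\<bar>y\<bar> \<le> \<bar>x-y\<bar> + \<bar>x\<bar>" using abs_triangle_ineq[of "y-x" x] by (simp add: abs_minus_commute)
    show "\<bar>y\<bar> \<ge> \<bar>x\<bar>/2" "\<bar>y\<bar> \<le> 2*\<bar>x\<bar>" "\<bar>x\<bar> > 0" using t1 t2 h by linarith+
  qed
  have p1: "\<bar>y\<bar> powr s \<le> 2 powr \<bar>s\<bar> * \<bar>x\<bar> powr s"
  proof (cases "s \<ge> 0")
    case True
    then have "\<bar>y\<bar> powr s \<le> (2*\<bar>x\<bar>) powr s" using y2 by (intro powr_mono2) auto
    then show ?thesis using True by (simp add: powr_mult)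
  next
    case False
    then have "\<bar>y\<bar> powr s \<le> (\<bar>x\<bar>/2) powr s" using y1 x0 by (intro powr_mono2') auto
    also have "\<dots> = 2 powr (-s) * \<bar>x\<bar> powr s" using x0 by (simp add: powr_divide powr_minus_divide)
    finally show ?thesis using False by simp
  qed
  have "(1+\<bar>y\<bar>) powr (-b) \<le> ((1+\<bar>x\<bar>)/2) powr (-b)" using y1 b by (intro powr_mono2') auto
  also have "\<dots> = 2 powr b * (1+\<bar>x\<bar>) powr (-b)"
    by (simp add: powr_divide powr_minus_divide add_pos_nonneg)
  finally have p2: "(1+\<bar>y\<bar>) powr (-b) \<le> 2 powr b * (1+\<bar>x\<bar>) powr (-b)" .
  have "\<bar>y\<bar> powr s * (1+\<bar>y\<bar>) powr (-b) \<le> (2 powr \<bar>s\<bar> * \<bar>x\<bar> powr s) * (2 powr b * (1+\<bar>x\<bar>) powr (-b))"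
    using p1 p2 by (intro mult_mono) auto
  then show ?thesis by (simp add: algebra_simps)
qed

definition wf :: "real \<Rightarrow> real \<Rightarrow> real" where "wf a z = (1 / (1 + z\<^sup>2)) powr a"
definition ff :: "real \<Rightarrow> real \<Rightarrow> real \<Rightarrow> real" where "ff s b t = \<bar>t\<bar> powr s * (1 + \<bar>t\<bar>) powr (-b)"
definition DD :: "real \<Rightarrow> real \<Rightarrow> real \<Rightarrow> real \<Rightarrow> real \<Rightarrow> real" where
  "DD a s b x y = (if \<bar>x - y\<bar> < \<bar>x\<bar>/2 then wf a (x - y) * (ff s b x)\<^sup>2 else 0)"

lemma wf_nonneg: "wf a z \<ge> 0" by (simp add: wf_def)
lemma ff_nonneg: "ff s b t \<ge> 0" by (simp add: ff_def)
lemma DD_nonneg: "DD a s b x y \<ge> 0" by (simp add: DD_def wf_nonneg)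
lemma wf_sym: "wf a (x - y) = wf a (y - x)" by (simp add: wf_def power2_commute)

lemma pointwise:
  fixes a b s x y :: real
  assumes a: "a \<ge> 0" and b: "b \<ge> 0"
  shows "wf a (x - y) * ff s b x * ff s b y \<le> 8 powr a * (ff s (a+b) x * ff s (a+b) y)
     + (2 powr \<bar>s\<bar> * 2 powr b) * DD a s b x y + (2 powr \<bar>s\<bar> * 2 powr b) * DD a s b y x"
proof -
  define C where "C = 2 powr \<bar>s\<bar> * 2 powr b"
  have C0: "C \<ge> 0" unfolding C_def by simp
  have nn: "0 \<le> 8 powr a * (ff s (a+b) x * ff s (a+b) y)" "0 \<le> C * DD a s b x y" "0 \<le> C * DD a s b y x"
    using C0 by (auto simp: ff_nonneg DD_nonneg)
  have "wf a (x - y) * ff s b x * ff s b y \<le> 8 powr a * (ff s (a+b) x * ff s (a+b) y) + C * DD a s b x y + C * DD a s b y x"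
  proof (cases "\<bar>x - y\<bar> < \<bar>x\<bar>/2")
    case True
    have "ff s b y \<le> C * ff s b x" using caseB[OF b True] unfolding ff_def C_def .
    then have "wf a (x - y) * ff s b x * ff s b y \<le> wf a (x - y) * ff s b x * (C * ff s b x)"
      by (intro mult_left_mono) (auto simp: wf_nonneg ff_nonneg)
    also have "\<dots> = C * DD a s b x y" using True by (simp add: DD_def power2_eq_square)
    finally show ?thesis using nn by linarith
  next
    case F1: False
    show ?thesis
    proof (cases "\<bar>y - x\<bar> < \<bar>y\<bar>/2")
      case True
      have "ff s b x \<le> C * ff s b y" using caseB[OF b True] unfolding ff_def C_def .
      then have "wf a (x - y) * ff s b x * ff s b y \<le> wf a (y - x) * (C * ff s b y) * ff s b y"
        by (subst wf_sym, intro mult_right_mono mult_left_mono) (auto simp: wf_nonneg ff_nonneg)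
      also have "\<dots> = C * DD a s b y x" using True by (simp add: DD_def power2_eq_square)
      finally show ?thesis using nn by linarith
    next
      case F2: False
      have "wf a (x - y) * ff s b x * ff s b y \<le> 8 powr a * (ff s (a+b) x * ff s (a+b) y)"
      proof (cases "\<bar>y\<bar> \<le> \<bar>x\<bar>")
        case True
        show ?thesis using caseA[OF a True, of s b] F1 unfolding wf_def ff_def by simp
      next
        case False
        have "wf a (y - x) * ff s b y * ff s b x \<le> 8 powr a * (ff s (a+b) y * ff s (a+b) x)"
          using caseA[OF a, of x y s b] False F2 unfolding wf_def ff_def by simp
        then show ?thesis by (simp add: wf_sym mult_ac)
      qed
      then show ?thesis using nn by linarith
    qed
  qed
  then show ?thesis unfolding C_def .
qed

lemma W_bound:
  fixes a r :: real
  assumes a: "0 \<le> a" "a < 1/2" and r: "r \<ge> 0"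
  shows "(\<integral>\<^sup>+z. ennreal (if \<bar>z\<bar> < r then wf a z else 0) \<partial>lborel) \<le> ennreal (2 * (r powr (1 - 2*a) / (1 - 2*a)))"
proof -
  define g where "g t = ennreal (if t \<le> r then t powr (-2*a) else 0)" for t :: real
  have [measurable]: "g \<in> borel_measurable borel" unfolding g_def by measurable
  have "(\<integral>\<^sup>+z. ennreal (if \<bar>z\<bar> < r then wf a z else 0) \<partial>lborel) \<le> (\<integral>\<^sup>+z. g \<bar>z\<bar> \<partial>lborel)"
  proof (rule nn_integral_mono_AE)
    show "AE z in lborel. ennreal (if \<bar>z\<bar> < r then wf a z else 0) \<le> g \<bar>z\<bar>"
      using AE_lborel_singleton[of 0]
    proof eventually_elim
      case (elim z)
      then show ?case using w_le_pow[OF a(1) elim] unfolding g_def wf_def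
        by (auto intro!: ennreal_leI)
    qed
  qed
  also have "\<dots> \<le> 2 * (\<integral>\<^sup>+z. indicator {0..} z * g z \<partial>lborel)"
    by (rule nn_integral_abs_sym) measurable
  also have "(\<integral>\<^sup>+z. indicator {0..} z * g z \<partial>lborel) = (\<integral>\<^sup>+z. ennreal (indicator {0..r} z * z powr (-2*a)) \<partial>lborel)"
    by (intro nn_integral_cong) (auto simp: g_def indicator_def)
  also have "\<dots> = ennreal (r powr (-2*a+1) / (-2*a+1))"
  proof (rule nn_integral_has_integral_lebesgue)
    show "((\<lambda>x. x powr (-2*a)) has_integral (r powr (-2*a+1) / (-2*a+1))) {0..r}"
      by (rule has_integral_powr_from_0) (use a r in auto)
  qed auto
  also have "2 * ennreal (r powr (-2*a+1) / (-2*a+1)) = ennreal (2 * (r powr (1 - 2*a) / (1 - 2*a)))"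
    using ennreal_mult''[of 2 "r powr (1 - 2*a) / (1 - 2*a)"] by (simp add: algebra_simps)
  finally show ?thesis by (simp add: mult_left_mono)
qed

lemma DD_meas[measurable]: "(\<lambda>(x, y). DD a s b x y) \<in> borel_measurable (lborel \<Otimes>\<^sub>M lborel)"
  unfolding DD_def wf_def ff_def by measurable

lemma DD_meas2[measurable]: "DD a s b x \<in> borel_measurable borel"
  unfolding DD_def wf_def ff_def by measurable

lemma ff_sq_pow:
  fixes x :: real
  shows "(ff s b x)\<^sup>2 * (\<bar>x\<bar> powr (1 - 2*a)) = (\<bar>x\<bar> powr (2* s + 1 - 2*a)) * (1 + \<bar>x\<bar>) powr (-(2*b))"
proof (cases "x = 0")
  case True then show ?thesis by (simp add: ff_def)
next
  case False
  have "(ff s b x)\<^sup>2 = (\<bar>x\<bar> powr (2* s)) * (1 + \<bar>x\<bar>) powr (-(2*b))"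
    unfolding ff_def power2_eq_square using False
    by (simp add: powr_add[symmetric] algebra_simps)
  then show ?thesis using False by (simp add: powr_add[symmetric] algebra_simps)
qed

lemma inner_DD:
  fixes a s b x :: real
  assumes a: "0 \<le> a" "a < 1/2"
  shows "(\<integral>\<^sup>+y. ennreal (DD a s b x y) \<partial>lborel)
     \<le> ennreal (2 / (1 - 2*a) * (\<bar>x\<bar> powr (2* s + 1 - 2*a) * (1 + \<bar>x\<bar>) powr (-(2*b))))"
proof -
  have "(\<integral>\<^sup>+y. ennreal (DD a s b x y) \<partial>lborel) = (\<integral>\<^sup>+z. ennreal (DD a s b x (x - z)) \<partial>lborel)"
    using nn_integral_real_affine[of "\<lambda>y. ennreal (DD a s b x y)" "-1" x] by simp
  also have "\<dots> = (\<integral>\<^sup>+z. ennreal ((ff s b x)\<^sup>2) * ennreal (if \<bar>z\<bar> < \<bar>x\<bar>/2 then wf a z else 0) \<partial>lborel)"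
    by (intro nn_integral_cong) (auto simp: DD_def ennreal_mult' wf_nonneg mult.commute)
  also have "\<dots> = ennreal ((ff s b x)\<^sup>2) * (\<integral>\<^sup>+z. ennreal (if \<bar>z\<bar> < \<bar>x\<bar>/2 then wf a z else 0) \<partial>lborel)"
    by (rule nn_integral_cmult) (unfold wf_def, measurable)
  also have "\<dots> \<le> ennreal ((ff s b x)\<^sup>2) * ennreal (2 * ((\<bar>x\<bar>/2) powr (1 - 2*a) / (1 - 2*a)))"
    by (intro mult_left_mono W_bound) (use a in auto)
  also have "\<dots> = ennreal ((ff s b x)\<^sup>2 * (2 * ((\<bar>x\<bar>/2) powr (1 - 2*a) / (1 - 2*a))))"
    by (rule ennreal_mult''[symmetric]) (use a in simp)
  also have "\<dots> \<le> ennreal (2 / (1 - 2*a) * ((ff s b x)\<^sup>2 * \<bar>x\<bar> powr (1 - 2*a)))"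
  proof (rule ennreal_leI)
    have u: "(\<bar>x\<bar>/2) powr (1 - 2*a) \<le> \<bar>x\<bar> powr (1 - 2*a)"
      using a by (intro powr_mono2) auto
    have "(ff s b x)\<^sup>2 * (\<bar>x\<bar>/2) powr (1 - 2*a) \<le> (ff s b x)\<^sup>2 * \<bar>x\<bar> powr (1 - 2*a)"
      by (rule mult_left_mono[OF u]) simp
    then have m: "2 / (1 - 2*a) * ((ff s b x)\<^sup>2 * (\<bar>x\<bar>/2) powr (1 - 2*a)) \<le> 2 / (1 - 2*a) * ((ff s b x)\<^sup>2 * \<bar>x\<bar> powr (1 - 2*a))"
      by (rule mult_left_mono) (use a in simp)
    have e: "(ff s b x)\<^sup>2 * (2 * ((\<bar>x\<bar>/2) powr (1 - 2*a) / (1 - 2*a))) = 2 / (1 - 2*a) * ((ff s b x)\<^sup>2 * (\<bar>x\<bar>/2) powr (1 - 2*a))"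
      by (simp add: field_simps)
    from m e show "(ff s b x)\<^sup>2 * (2 * ((\<bar>x\<bar>/2) powr (1 - 2*a) / (1 - 2*a)))
        \<le> 2 / (1 - 2*a) * ((ff s b x)\<^sup>2 * \<bar>x\<bar> powr (1 - 2*a))"
      by linarith
  qed
  also have "\<dots> = ennreal (2 / (1 - 2*a) * (\<bar>x\<bar> powr (2* s + 1 - 2*a) * (1 + \<bar>x\<bar>) powr (-(2*b))))"
    by (simp add: ff_sq_pow)
  finally show ?thesis .
qed

lemma Bpart:
  fixes a s b :: real
  assumes a: "0 \<le> a" "a < 1/2" and s: "-1/2 < s" and g: "a + b - s > 1"
  shows "(\<integral>\<^sup>+x. (\<integral>\<^sup>+y. ennreal (DD a s b x y) \<partial>lborel) \<partial>lborel) < \<infinity>"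
proof -
  have "(\<integral>\<^sup>+x. (\<integral>\<^sup>+y. ennreal (DD a s b x y) \<partial>lborel) \<partial>lborel)
     \<le> (\<integral>\<^sup>+x. ennreal (2 / (1 - 2*a)) * ennreal (\<bar>x\<bar> powr (2* s + 1 - 2*a) * (1 + \<bar>x\<bar>) powr (-(2*b))) \<partial>lborel)"
  proof (rule nn_integral_mono)
    fix x :: real
    have "ennreal (2 / (1 - 2*a) * (\<bar>x\<bar> powr (2 * s + 1 - 2*a) * (1 + \<bar>x\<bar>) powr (-(2*b))))
       = ennreal (2 / (1 - 2*a)) * ennreal (\<bar>x\<bar> powr (2 * s + 1 - 2*a) * (1 + \<bar>x\<bar>) powr (-(2*b)))"
      by (rule ennreal_mult'') (use a in simp)
    then show "(\<integral>\<^sup>+y. ennreal (DD a s b x y) \<partial>lborel) \<le> ennreal (2 / (1 - 2*a)) * ennreal (\<bar>x\<bar> powr (2 * s + 1 - 2*a) * (1 + \<bar>x\<bar>) powr (-(2*b)))"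
      using inner_DD[OF a, of s b x] by simp
  qed
  also have "\<dots> = ennreal (2 / (1 - 2*a)) * (\<integral>\<^sup>+x. ennreal (\<bar>x\<bar> powr (2* s + 1 - 2*a) * (1 + \<bar>x\<bar>) powr (-(2*b))) \<partial>lborel)"
    by (rule nn_integral_cmult) measurable
  also have "\<dots> < \<infinity>"
    using pow_int_finite[of "2* s + 1 - 2*a" "2*b"] s a g by (simp add: ennreal_mult_less_top)
  finally show ?thesis .
qed

lemma DD_meas_swap[measurable]: "(\<lambda>p. DD a s b (snd p) (fst p)) \<in> borel_measurable (lborel \<Otimes>\<^sub>M lborel)"
  unfolding DD_def wf_def ff_def by measurable

lemma core:
  fixes a s b :: real
  assumes a: "0 \<le> a" "a < 1/2" and s: "-1/2 < s" and b: "0 \<le> b" and g: "a + b - s > 1"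
  shows "(\<integral>\<^sup>+x. (\<integral>\<^sup>+y. ennreal (wf a (x - y) * ff s b x * ff s b y) \<partial>lborel) \<partial>lborel) < \<infinity>"
proof -
  define C where "C = 2 powr \<bar>s\<bar> * 2 powr b"
  have C0: "C \<ge> 0" unfolding C_def by simp
  define IR where "IR = (\<integral>\<^sup>+t. ennreal (ff s (a+b) t) \<partial>lborel)"
  have IR: "IR < \<infinity>" unfolding IR_def ff_def
    by (rule pow_int_finite) (use s g in auto)
  have [measurable]: "ff s c \<in> borel_measurable borel" for c unfolding ff_def by measurable
  have [measurable]: "wf a \<in> borel_measurable borel" unfolding wf_def by measurable
  have "(\<integral>\<^sup>+x. (\<integral>\<^sup>+y. ennreal (wf a (x - y) * ff s b x * ff s b y) \<partial>lborel) \<partial>lborel)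
      = (\<integral>\<^sup>+p. ennreal (wf a (fst p - snd p) * ff s b (fst p) * ff s b (snd p)) \<partial>(lborel \<Otimes>\<^sub>M lborel))"
    by (subst lborel.nn_integral_fst[symmetric]) (auto, measurable)
  also have "\<dots> \<le> (\<integral>\<^sup>+p. ennreal (8 powr a) * (ennreal (ff s (a+b) (fst p)) * ennreal (ff s (a+b) (snd p)))
       + ennreal C * ennreal (DD a s b (fst p) (snd p)) + ennreal C * ennreal (DD a s b (snd p) (fst p)) \<partial>(lborel \<Otimes>\<^sub>M lborel))"
  proof (rule nn_integral_mono)
    fix p :: "real \<times> real"
    obtain x y where p: "p = (x, y)" by (cases p)
    have "ennreal (wf a (x - y) * ff s b x * ff s b y) \<le> ennreal (8 powr a * (ff s (a+b) x * ff s (a+b) y)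
     + C * DD a s b x y + C * DD a s b y x)"
      using pointwise[OF a(1) b, of x y s] unfolding C_def by (rule ennreal_leI)
    also have "\<dots> = ennreal (8 powr a) * (ennreal (ff s (a+b) x) * ennreal (ff s (a+b) y))
       + ennreal C * ennreal (DD a s b x y) + ennreal C * ennreal (DD a s b y x)"
      using C0 by (simp add: ennreal_plus ennreal_mult ff_nonneg DD_nonneg)
    finally show "ennreal (wf a (fst p - snd p) * ff s b (fst p) * ff s b (snd p)) \<le> ennreal (8 powr a) * (ennreal (ff s (a+b) (fst p)) * ennreal (ff s (a+b) (snd p)))
       + ennreal C * ennreal (DD a s b (fst p) (snd p)) + ennreal C * ennreal (DD a s b (snd p) (fst p))"
      by (simp add: p)
  qed
  also have "\<dots> = (\<integral>\<^sup>+p. ennreal (8 powr a) * (ennreal (ff s (a+b) (fst p)) * ennreal (ff s (a+b) (snd p))) \<partial>(lborel \<Otimes>\<^sub>M lborel))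
      + (\<integral>\<^sup>+p. ennreal C * ennreal (DD a s b (fst p) (snd p)) \<partial>(lborel \<Otimes>\<^sub>M lborel))
      + (\<integral>\<^sup>+p. ennreal C * ennreal (DD a s b (snd p) (fst p)) \<partial>(lborel \<Otimes>\<^sub>M lborel))"
  proof -
    have mA: "(\<lambda>p. ennreal (8 powr a) * (ennreal (ff s (a+b) (fst p)) * ennreal (ff s (a+b) (snd p)))) \<in> borel_measurable (lborel \<Otimes>\<^sub>M lborel)"
      by measurable
    have mB: "(\<lambda>p. ennreal C * ennreal (DD a s b (fst p) (snd p))) \<in> borel_measurable (lborel \<Otimes>\<^sub>M lborel)"
      using DD_meas[of a s b] by (simp add: split_beta')
    have mB': "(\<lambda>p. ennreal C * ennreal (DD a s b (snd p) (fst p))) \<in> borel_measurable (lborel \<Otimes>\<^sub>M lborel)"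
      by measurable
    show ?thesis
      by (simp add: nn_integral_add mA mB mB')
  qed
  also have "(\<integral>\<^sup>+p. ennreal (8 powr a) * (ennreal (ff s (a+b) (fst p)) * ennreal (ff s (a+b) (snd p))) \<partial>(lborel \<Otimes>\<^sub>M lborel))
      = ennreal (8 powr a) * (IR * IR)"
  proof -
    have "(\<integral>\<^sup>+p. ennreal (8 powr a) * (ennreal (ff s (a+b) (fst p)) * ennreal (ff s (a+b) (snd p))) \<partial>(lborel \<Otimes>\<^sub>M lborel))
      = (\<integral>\<^sup>+x. (\<integral>\<^sup>+y. ennreal (8 powr a) * (ennreal (ff s (a+b) x) * ennreal (ff s (a+b) y)) \<partial>lborel) \<partial>lborel)"
      by (subst lborel.nn_integral_fst[symmetric]) (auto, measurable)
    also have "\<dots> = (\<integral>\<^sup>+x. ennreal (8 powr a) * ennreal (ff s (a+b) x) * IR \<partial>lborel)"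
      unfolding IR_def by (subst nn_integral_cmult[symmetric], measurable)+ (simp add: mult.assoc)
    also have "\<dots> = ennreal (8 powr a) * (IR * IR)"
      unfolding IR_def by (subst nn_integral_multc, measurable, subst nn_integral_cmult, measurable) (simp add: mult_ac)
    finally show ?thesis .
  qed
  also have "(\<integral>\<^sup>+p. ennreal C * ennreal (DD a s b (fst p) (snd p)) \<partial>(lborel \<Otimes>\<^sub>M lborel))
      = ennreal C * (\<integral>\<^sup>+x. (\<integral>\<^sup>+y. ennreal (DD a s b x y) \<partial>lborel) \<partial>lborel)"
    by (subst nn_integral_cmult, measurable, subst lborel.nn_integral_fst[symmetric]) (auto, measurable)
  also have "(\<integral>\<^sup>+p. ennreal C * ennreal (DD a s b (snd p) (fst p)) \<partial>(lborel \<Otimes>\<^sub>M lborel))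
      = ennreal C * (\<integral>\<^sup>+x. (\<integral>\<^sup>+y. ennreal (DD a s b x y) \<partial>lborel) \<partial>lborel)"
    by (subst nn_integral_cmult, measurable, subst lborel_pair.nn_integral_snd[symmetric]) (auto, measurable)
  also have "ennreal (8 powr a) * (IR * IR) + ennreal C * (\<integral>\<^sup>+x. (\<integral>\<^sup>+y. ennreal (DD a s b x y) \<partial>lborel) \<partial>lborel)
     + ennreal C * (\<integral>\<^sup>+x. (\<integral>\<^sup>+y. ennreal (DD a s b x y) \<partial>lborel) \<partial>lborel) < \<infinity>"
    using IR Bpart[OF a s g] by (simp add: ennreal_mult_less_top)
  finally show ?thesis .
qed


lemma W_split:
  fixes z :: "real^'n" and \<alpha> :: real
  assumes "\<alpha> \<ge> 0"
  shows "(1 / (1 + (norm z)\<^sup>2)) powr (2*\<alpha>) \<le> (\<Prod>i\<in>UNIV. wf (2*\<alpha> / real CARD('n)) (z $ i))"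
proof -
  define a where "a = 2*\<alpha> / real CARD('n)"
  have pos: "1 / (1 + (norm z)\<^sup>2) > 0" by (simp add: add_pos_nonneg)
  have "(1 / (1 + (norm z)\<^sup>2)) powr (2*\<alpha>) = (\<Prod>i\<in>(UNIV::'n set). (1 / (1 + (norm z)\<^sup>2)) powr a)"
    using pos by (simp add: powr_power a_def)
  also have "\<dots> \<le> (\<Prod>i\<in>UNIV. wf a (z $ i))"
  proof (rule prod_mono)
    fix i :: 'n
    have "(z $ i)\<^sup>2 \<le> (norm z)\<^sup>2"
      using component_le_norm_cart[of z i] by (metis abs_ge_zero power2_abs power_mono)
    then have "1 / (1 + (norm z)\<^sup>2) \<le> 1 / (1 + (z $ i)\<^sup>2)"
      by (intro divide_left_mono) (auto simp: add_pos_nonneg)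
    then show "0 \<le> (1 / (1 + (norm z)\<^sup>2)) powr a \<and> (1 / (1 + (norm z)\<^sup>2)) powr a \<le> wf a (z $ i)"
      unfolding wf_def using assms pos by (auto simp: a_def intro!: powr_mono2)
  qed
  finally show ?thesis unfolding a_def .
qed

lemma one_plus_powr_le:
  fixes N e :: real
  assumes N: "N \<ge> 0" and e: "e > 0"
  shows "(1 + N) powr e \<le> 2 powr e * (1 + N powr e)"
proof (cases "N \<le> 1")
  case True
  have "(1 + N) powr e \<le> 2 powr e" using True N e by (intro powr_mono2) auto
  also have "\<dots> \<le> 2 powr e * (1 + N powr e)" by (simp add: mult_le_cancel_left1)
  finally show ?thesis .
next
  case False
  have "(1 + N) powr e \<le> (2 * N) powr e" using False e by (intro powr_mono2) auto
  also have "\<dots> = 2 powr e * N powr e" using False by (simp add: powr_mult)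
  also have "\<dots> \<le> 2 powr e * (1 + N powr e)" by (intro mult_left_mono) auto
  finally show ?thesis .
qed

lemma K_split:
  fixes \<eta> :: "real^'n" and H :: "real^'n" and bb :: "'n \<Rightarrow> real"
  assumes e: "e = 1 + 2*H0 - 2*\<kappa> - 2*\<epsilon>" "e > 0" and bb: "\<And>i. bb i \<ge> 0" "sum bb UNIV = e"
  shows "K_kernel H0 H \<kappa> \<epsilon> \<eta> \<le> 2 powr e * (\<Prod>i\<in>UNIV. ff (1 - 2 * H $ i) (bb i) (\<eta> $ i))"
proof -
  define N where "N = norm \<eta>"
  define P where "P = (\<Prod>i\<in>UNIV. (1 + \<bar>\<eta> $ i\<bar>) powr bb i)"
  have Ppos: "P > 0" unfolding P_def by (intro prod_pos) (auto simp: add_pos_nonneg)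
  have "P \<le> (\<Prod>i\<in>UNIV. (1 + N) powr bb i)"
    unfolding P_def N_def
    by (intro prod_mono conjI powr_mono2) (auto simp: bb component_le_norm_cart)
  also have "\<dots> = (1 + N) powr e"
  proof -
    have "1 + N \<noteq> 0" unfolding N_def by (metis add_pos_nonneg norm_ge_zero zero_less_one order_less_irrefl)
    then have "(1 + N) powr sum bb UNIV = (\<Prod>i\<in>UNIV. (1 + N) powr bb i)" by (rule powr_sum)
    then show ?thesis using bb(2) by simp
  qed
  also have "\<dots> \<le> 2 powr e * (1 + N powr e)"
    by (rule one_plus_powr_le) (use e in \<open>auto simp: N_def\<close>)
  finally have PN: "P \<le> 2 powr e * (1 + N powr e)" .
  have A: "1 / (1 + N powr e) \<le> 2 powr e / P"
    using PN Ppos by (simp add: divide_simps add_pos_nonneg mult.commute)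
  have invP: "1 / P = (\<Prod>i\<in>UNIV. (1 + \<bar>\<eta> $ i\<bar>) powr (- bb i))"
    unfolding P_def by (simp add: powr_minus_divide prod_dividef)
  have B: "(\<Prod>i\<in>UNIV. 1 / (\<bar>\<eta> $ i\<bar> powr (2 * H $ i - 1))) = (\<Prod>i\<in>UNIV. \<bar>\<eta> $ i\<bar> powr (1 - 2 * H $ i))"
  proof (rule prod.cong)
    fix i
    have "\<bar>\<eta> $ i\<bar> powr (1 - 2 * H $ i) = \<bar>\<eta> $ i\<bar> powr (- (2 * H $ i - 1))" by simp
    then show "1 / (\<bar>\<eta> $ i\<bar> powr (2 * H $ i - 1)) = \<bar>\<eta> $ i\<bar> powr (1 - 2 * H $ i)"
      by (simp only: powr_minus_divide)
  qed simp
  have Bnn: "(\<Prod>i\<in>UNIV. \<bar>\<eta> $ i\<bar> powr (1 - 2 * H $ i)) \<ge> 0" by (intro prod_nonneg) auto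
  have "K_kernel H0 H \<kappa> \<epsilon> \<eta> = 1 / (1 + N powr e) * (\<Prod>i\<in>UNIV. \<bar>\<eta> $ i\<bar> powr (1 - 2 * H $ i))"
    unfolding K_kernel_def N_def B e(1) ..
  also have "\<dots> \<le> 2 powr e / P * (\<Prod>i\<in>UNIV. \<bar>\<eta> $ i\<bar> powr (1 - 2 * H $ i))"
    by (rule mult_right_mono[OF A Bnn])
  also have "2 powr e / P = 2 powr e * (\<Prod>i\<in>UNIV. (1 + \<bar>\<eta> $ i\<bar>) powr (- bb i))"
    using invP by (metis times_divide_eq_right mult.right_neutral)
  also have "2 powr e * (\<Prod>i\<in>UNIV. (1 + \<bar>\<eta> $ i\<bar>) powr (- bb i)) * (\<Prod>i\<in>UNIV. \<bar>\<eta> $ i\<bar> powr (1 - 2 * H $ i))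
     = 2 powr e * (\<Prod>i\<in>UNIV. ff (1 - 2 * H $ i) (bb i) (\<eta> $ i))"
    unfolding ff_def by (simp add: prod.distrib mult_ac)
  finally show ?thesis .
qed


lemma wf_meas[measurable]: "wf a \<in> borel_measurable borel" unfolding wf_def by measurable
lemma ff_meas[measurable]: "ff s b \<in> borel_measurable borel" unfolding ff_def by measurable


lemma Basis_vec_range: "(Basis :: (real^'n) set) = range (\<lambda>i. axis i 1)"
  by (auto simp: Basis_vec_def)

lemma vec_prod_nn:
  fixes g :: "'n::finite \<Rightarrow> real \<Rightarrow> ennreal"
  assumes [measurable]: "\<And>i. g i \<in> borel_measurable borel"
  shows "(\<integral>\<^sup>+x. (\<Prod>i\<in>UNIV. g i (x$i)) \<partial>(lborel::(real^'n) measure)) = (\<Prod>i\<in>UNIV. \<integral>\<^sup>+t. g i t \<partial>lborel)"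
proof -
  define G where "G b = g (THE i. b = axis i (1::real))" for b :: "real^'n"
  have Gax: "G (axis i 1) = g i" for i
    unfolding G_def by (rule arg_cong[where f=g]) (auto simp: axis_eq_axis)
  have inj: "inj (\<lambda>i::'n. axis i (1::real))" by (auto simp: inj_def axis_eq_axis)
  have meas: "(\<lambda>f. \<Sum>b\<in>Basis. f b *\<^sub>R b) \<in> (\<Pi>\<^sub>M b\<in>(Basis::(real^'n) set). lborel) \<rightarrow>\<^sub>M (borel :: (real^'n) measure)"
    by measurable
  have comp: "(\<Sum>b\<in>(Basis::(real^'n) set). f b *\<^sub>R b) $ i = f (axis i 1)" for f i
  proof -
    have "(\<Sum>b\<in>(Basis::(real^'n) set). f b *\<^sub>R b) $ i = (\<Sum>j\<in>UNIV. f (axis j 1) *\<^sub>R axis j (1::real)) $ i"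
      unfolding Basis_vec_range by (subst sum.reindex[OF inj]) simp
    also have "\<dots> = (\<Sum>j\<in>UNIV. if j = i then f (axis j 1) else 0)"
      unfolding sum_component by (intro sum.cong) (auto simp: axis_def)
    also have "\<dots> = f (axis i 1)" by simp
    finally show ?thesis .
  qed
  have "(\<integral>\<^sup>+x. (\<Prod>i\<in>UNIV. g i (x$i)) \<partial>(lborel::(real^'n) measure))
      = (\<integral>\<^sup>+f. (\<Prod>i\<in>UNIV. g i (f (axis i 1))) \<partial>(\<Pi>\<^sub>M b\<in>(Basis::(real^'n) set). lborel))"
    apply (subst lborel_eq)
    apply (subst nn_integral_distr[OF meas])
     apply measurable
    apply (simp only: comp)
    done
  also have "\<dots> = (\<integral>\<^sup>+f. (\<Prod>b\<in>(Basis::(real^'n) set). G b (f b)) \<partial>(\<Pi>\<^sub>M b\<in>(Basis::(real^'n) set). lborel))"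
    unfolding Basis_vec_range by (subst prod.reindex[OF inj]) (simp add: Gax)
  also have "\<dots> = (\<Prod>b\<in>(Basis::(real^'n) set). \<integral>\<^sup>+t. G b t \<partial>lborel)"
    by (rule product_sigma_finite.product_nn_integral_prod)
       (auto simp: product_sigma_finite_def G_def intro: lborel.sigma_finite_measure_axioms)
  also have "\<dots> = (\<Prod>i\<in>UNIV. \<integral>\<^sup>+t. g i t \<partial>lborel)"
    unfolding Basis_vec_range by (subst prod.reindex[OF inj]) (simp add: Gax)
  finally show ?thesis .
qed




lemma nth_fst_meas1[measurable]: "(\<lambda>x::(real^'n)\<times>(real^'n). fst x $ i) \<in> borel_measurable (lborel \<Otimes>\<^sub>M lborel)"
proof -
  have nth: "(\<lambda>x::real^'n. x $ i) \<in> borel_measurable lborel" by simp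
  show ?thesis by (rule measurable_compose[OF measurable_fst nth])
qed
lemma nth_snd_meas1[measurable]: "(\<lambda>x::(real^'n)\<times>(real^'n). snd x $ i) \<in> borel_measurable (lborel \<Otimes>\<^sub>M lborel)"
proof -
  have nth: "(\<lambda>x::real^'n. x $ i) \<in> borel_measurable lborel" by simp
  show ?thesis by (rule measurable_compose[OF measurable_snd nth])
qed
lemma nth_fst_meas2[measurable]: "(\<lambda>x::(real^'n)\<times>(real^'n). fst x $ i) \<in> borel_measurable (borel \<Otimes>\<^sub>M borel)"
  using measurable_compose[OF measurable_fst borel_measurable_nth[of i]] by simp
lemma nth_snd_meas2[measurable]: "(\<lambda>x::(real^'n)\<times>(real^'n). snd x $ i) \<in> borel_measurable (borel \<Otimes>\<^sub>M borel)"
  using measurable_compose[OF measurable_snd borel_measurable_nth[of i]] by simp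

lemma K_nonneg: "K_kernel H0 H \<kappa> \<epsilon> \<eta> \<ge> 0"
  unfolding K_kernel_def by (intro mult_nonneg_nonneg prod_nonneg) (auto simp: add_pos_nonneg)

lemma main_bound:
  fixes F :: "'n::finite \<Rightarrow> real \<Rightarrow> real \<Rightarrow> real"
  assumes meas: "\<And>i. (\<lambda>p. F i (fst p) (snd p)) \<in> borel_measurable (lborel \<Otimes>\<^sub>M lborel)"
    and nn: "\<And>i x y. F i x y \<ge> 0"
    and fin: "\<And>i. (\<integral>\<^sup>+x. (\<integral>\<^sup>+y. ennreal (F i x y) \<partial>lborel) \<partial>lborel) < \<infinity>"
  shows "(\<integral>\<^sup>+p. (\<Prod>i\<in>UNIV. ennreal (F i (fst p $ i) (snd p $ i))) \<partial>((lborel::(real^'n) measure) \<Otimes>\<^sub>M lborel)) < \<infinity>"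
proof -
  have m1[measurable]: "(\<lambda>p. F i (fst p) (snd p)) \<in> borel_measurable (borel \<Otimes>\<^sub>M lborel)" for i
    using meas[of i] by (simp add: measurable_lborel1 cong: measurable_cong_sets)
  have m0: "(\<lambda>p. F i (fst p) (snd p)) \<in> borel_measurable (borel \<Otimes>\<^sub>M borel)" for i
    using meas[of i] by (simp add: measurable_lborel1 cong: measurable_cong_sets)
  have m4[measurable]: "F i c \<in> borel_measurable borel" for i c
    using measurable_Pair2[OF m0[of i], of c] by simp
  have m3[measurable]: "(\<lambda>x. F i (fst x $ i) (snd x $ i)) \<in> borel_measurable ((borel::(real^'n) measure) \<Otimes>\<^sub>M borel)" for i
  proof -
    have "(\<lambda>x::(real^'n)\<times>(real^'n). (fst x $ i, snd x $ i)) \<in> (borel \<Otimes>\<^sub>M borel) \<rightarrow>\<^sub>M (borel \<Otimes>\<^sub>M borel)"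
      by (intro measurable_Pair measurable_compose[OF measurable_fst borel_measurable_nth]
          measurable_compose[OF measurable_snd borel_measurable_nth])
    from measurable_compose[OF this m0[of i]] show ?thesis by simp
  qed
  have "(\<integral>\<^sup>+p. (\<Prod>i\<in>UNIV. ennreal (F i (fst p $ i) (snd p $ i))) \<partial>((lborel::(real^'n) measure) \<Otimes>\<^sub>M lborel))
      = (\<integral>\<^sup>+x. (\<integral>\<^sup>+y. (\<Prod>i\<in>UNIV. ennreal (F i (x $ i) (y $ i))) \<partial>lborel) \<partial>(lborel::(real^'n) measure))"
    by (subst lborel.nn_integral_fst[symmetric]) (auto, measurable)
  also have "\<dots> = (\<integral>\<^sup>+x. (\<Prod>i\<in>UNIV. \<integral>\<^sup>+t. ennreal (F i (x $ i) t) \<partial>lborel) \<partial>(lborel::(real^'n) measure))"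
    by (intro nn_integral_cong vec_prod_nn) measurable
  also have "\<dots> = (\<Prod>i\<in>UNIV. \<integral>\<^sup>+x. (\<integral>\<^sup>+t. ennreal (F i x t) \<partial>lborel) \<partial>lborel)"
    by (rule vec_prod_nn[where g="\<lambda>i x. \<integral>\<^sup>+t. ennreal (F i x t) \<partial>lborel"]) measurable
  also have "\<dots> < \<infinity>"
  proof -
    have "(\<Prod>i\<in>UNIV. \<integral>\<^sup>+x. (\<integral>\<^sup>+t. ennreal (F i x t) \<partial>lborel) \<partial>lborel) \<noteq> top"
    proof
      assume "(\<Prod>i\<in>UNIV. \<integral>\<^sup>+x. (\<integral>\<^sup>+t. ennreal (F i x t) \<partial>lborel) \<partial>lborel) = top"
      then obtain i where "(\<integral>\<^sup>+x. (\<integral>\<^sup>+t. ennreal (F i x t) \<partial>lborel) \<partial>lborel) = top"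
        unfolding ennreal_prod_eq_top by blast
      with fin[of i] show False by simp
    qed
    then show ?thesis by (simp add: less_top)
  qed
  finally show ?thesis .
qed

theorem lemma3p4:
  fixes H0 :: real and H :: "real^'n" and \<alpha> :: real
  defines "d \<equiv> real CARD('n)"
  defines "Hp \<equiv> (\<Sum>i\<in>UNIV. H $ i)"
  assumes H0: "0 < H0" "H0 < 1"
    and Hi: "\<forall>i. 0 < H $ i \<and> H $ i < 3/4"
    and lower: "3*d/4 - 1/2 < H0 + Hp" and upper: "H0 + Hp \<le> d - 1/2"
    and alpha: "max (d - 1/2 - (H0 + Hp)) ((d - 1)/4) < \<alpha>" "\<alpha> < d/4"
  shows "\<exists>\<kappa>>0. \<exists>\<epsilon>>0.
    (\<integral>\<^sup>+ p. ennreal ((1 / (1 + (norm (fst p - snd p))\<^sup>2) powr (2*\<alpha>))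
        * K_kernel H0 H \<kappa> \<epsilon> (fst p) * K_kernel H0 H \<kappa> \<epsilon> (snd p))
      \<partial>(lborel \<Otimes>\<^sub>M lborel)) < \<infinity>"
proof -
  have d1: "d \<ge> 1" unfolding d_def by simp
  have dpos: "d > 0" using d1 by simp
  define X where "X = \<alpha> - (d - 1/2 - (H0 + Hp))"
  have X: "X > 0" using alpha(1) unfolding X_def by simp
  have apos: "\<alpha> > 0" using alpha(1) d1 by (smt (verit) divide_nonneg_pos max.strict_boundedE)
  define \<delta> where "\<delta> = min (X/4) ((1 + 2*H0)/8)"
  have \<delta>: "\<delta> > 0" "4*\<delta> \<le> X" "8*\<delta> \<le> 1 + 2*H0" 
  proof -
    have "\<delta> \<le> X/4" "\<delta> \<le> (1 + 2*H0)/8" unfolding \<delta>_def by (rule min.cobounded1, rule min.cobounded2)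
    moreover have "\<delta> > 0" using X H0 unfolding \<delta>_def by auto
    ultimately show "\<delta> > 0" "4*\<delta> \<le> X" "8*\<delta> \<le> 1 + 2*H0" by (simp_all add: field_simps)
  qed
  define e where "e = 1 + 2*H0 - 2*\<delta> - 2*\<delta>"
  have e: "e > 0" using \<delta> H0 unfolding e_def
    by linarith
  define a where "a = 2*\<alpha> / d"
  have a: "0 \<le> a" "a < 1/2" using apos alpha(2) dpos unfolding a_def by (auto simp: field_simps)
  have ad: "a * d = 2*\<alpha>" using dpos unfolding a_def by simp
  define \<theta> where "\<theta> = (e - 2*d + 2*Hp + 2*\<alpha>) / d"
  have \<theta>: "\<theta> > 0"
  proof -
    have "e - 2*d + 2*Hp + 2*\<alpha> = 2*X - 4*\<delta>" unfolding e_def X_def by simp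
    then have "e - 2*d + 2*Hp + 2*\<alpha> > 0" using \<delta> X by linarith
    then show ?thesis unfolding \<theta>_def using dpos by simp
  qed
  have \<theta>d: "\<theta> * d = e - 2*d + 2*Hp + 2*\<alpha>" using dpos unfolding \<theta>_def by simp
  define bb where "bb i = 2 - 2 * H $ i - a + \<theta>" for i
  have Hi': "H $ i < 3/4" "H $ i > 0" for i using Hi by auto
  have bb: "bb i \<ge> 0" for i using Hi'[of i] a \<theta> unfolding bb_def by linarith
  have sumbb: "sum bb UNIV = e"
  proof -
    have "sum bb UNIV = (\<Sum>i\<in>UNIV. (2 - a + \<theta>) - 2 * H $ i)" unfolding bb_def by (intro sum.cong) auto
    also have "\<dots> = d * (2 - a + \<theta>) - 2 * Hp" unfolding Hp_def d_def by (simp add: sum_subtractf sum_distrib_left)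
    also have "\<dots> = e" using ad \<theta>d by (simp add: algebra_simps)
    finally show ?thesis .
  qed
  define F where "F i x y = wf a (x - y) * ff (1 - 2 * H $ i) (bb i) x * ff (1 - 2 * H $ i) (bb i) y" for i x y
  have Fnn: "F i x y \<ge> 0" for i x y unfolding F_def by (simp add: wf_nonneg ff_nonneg)
  have Fmeas: "(\<lambda>p. F i (fst p) (snd p)) \<in> borel_measurable (lborel \<Otimes>\<^sub>M lborel)" for i
    unfolding F_def by measurable
  have Ffin: "(\<integral>\<^sup>+x. (\<integral>\<^sup>+y. ennreal (F i x y) \<partial>lborel) \<partial>lborel) < \<infinity>" for i
    unfolding F_def
  proof (rule core[OF a])
    show "- 1 / 2 < 1 - 2 * H $ i" using Hi'[of i] by linarith
    show "0 \<le> bb i" by (rule bb)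
    show "1 < a + bb i - (1 - 2 * H $ i)" using \<theta> unfolding bb_def by simp
  qed
  have e_eq: "e = 1 + 2*H0 - 2*\<delta> - 2*\<delta>" by (simp add: e_def)
  have pw: "(1 / (1 + (norm (fst p - snd p))\<^sup>2) powr (2*\<alpha>)) * K_kernel H0 H \<delta> \<delta> (fst p) * K_kernel H0 H \<delta> \<delta> (snd p)
      \<le> (2 powr e * 2 powr e) * (\<Prod>i\<in>UNIV. F i (fst p $ i) (snd p $ i))" for p :: "(real^'n) \<times> (real^'n)"
  proof -
    have W: "(1 / (1 + (norm (fst p - snd p))\<^sup>2) powr (2*\<alpha>)) \<le> (\<Prod>i\<in>UNIV. wf a (fst p $ i - snd p $ i))"
    proof -
      have "1 / (1 + (norm (fst p - snd p))\<^sup>2) powr (2*\<alpha>) = (1 / (1 + (norm (fst p - snd p))\<^sup>2)) powr (2*\<alpha>)"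
        by (simp add: powr_divide)
      then show ?thesis using W_split[of \<alpha> "fst p - snd p"] apos unfolding a_def d_def by simp
    qed
    have K1: "K_kernel H0 H \<delta> \<delta> (fst p) \<le> 2 powr e * (\<Prod>i\<in>UNIV. ff (1 - 2 * H $ i) (bb i) (fst p $ i))"
      by (rule K_split[OF e_eq e bb sumbb])
    have K2: "K_kernel H0 H \<delta> \<delta> (snd p) \<le> 2 powr e * (\<Prod>i\<in>UNIV. ff (1 - 2 * H $ i) (bb i) (snd p $ i))"
      by (rule K_split[OF e_eq e bb sumbb])
    have "(1 / (1 + (norm (fst p - snd p))\<^sup>2) powr (2*\<alpha>)) * K_kernel H0 H \<delta> \<delta> (fst p) * K_kernel H0 H \<delta> \<delta> (snd p)
      \<le> (\<Prod>i\<in>UNIV. wf a (fst p $ i - snd p $ i)) * (2 powr e * (\<Prod>i\<in>UNIV. ff (1 - 2 * H $ i) (bb i) (fst p $ i)))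
         * (2 powr e * (\<Prod>i\<in>UNIV. ff (1 - 2 * H $ i) (bb i) (snd p $ i)))"
      using W K1 K2 by (intro mult_mono) (auto simp: K_nonneg wf_nonneg ff_nonneg prod_nonneg)
    also have "\<dots> = (2 powr e * 2 powr e) * (\<Prod>i\<in>UNIV. F i (fst p $ i) (snd p $ i))"
      unfolding F_def by (simp add: prod.distrib mult_ac)
    finally show ?thesis .
  qed
  have "(\<integral>\<^sup>+ p. ennreal ((1 / (1 + (norm (fst p - snd p))\<^sup>2) powr (2*\<alpha>))
        * K_kernel H0 H \<delta> \<delta> (fst p) * K_kernel H0 H \<delta> \<delta> (snd p)) \<partial>(lborel \<Otimes>\<^sub>M lborel))
      \<le> (\<integral>\<^sup>+ p. ennreal (2 powr e * 2 powr e) * (\<Prod>i\<in>UNIV. ennreal (F i (fst p $ i) (snd p $ i))) \<partial>((lborel::(real^'n) measure) \<Otimes>\<^sub>M lborel))"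
  proof (rule nn_integral_mono)
    fix p :: "(real^'n) \<times> (real^'n)"
    have "ennreal (2 powr e * 2 powr e) * (\<Prod>i\<in>UNIV. ennreal (F i (fst p $ i) (snd p $ i)))
       = ennreal ((2 powr e * 2 powr e) * (\<Prod>i\<in>UNIV. F i (fst p $ i) (snd p $ i)))"
      by (simp add: prod_ennreal Fnn ennreal_mult prod_nonneg)
    then show "ennreal ((1 / (1 + (norm (fst p - snd p))\<^sup>2) powr (2*\<alpha>))
        * K_kernel H0 H \<delta> \<delta> (fst p) * K_kernel H0 H \<delta> \<delta> (snd p))
      \<le> ennreal (2 powr e * 2 powr e) * (\<Prod>i\<in>UNIV. ennreal (F i (fst p $ i) (snd p $ i)))"
      using pw[of p] by (simp add: ennreal_leI)
  qed
  also have "\<dots> = ennreal (2 powr e * 2 powr e) * (\<integral>\<^sup>+ p. (\<Prod>i\<in>UNIV. ennreal (F i (fst p $ i) (snd p $ i))) \<partial>((lborel::(real^'n) measure) \<Otimes>\<^sub>M lborel))"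
  proof (rule nn_integral_cmult)
    show "(\<lambda>p. \<Prod>i\<in>UNIV. ennreal (F i (fst p $ i) (snd p $ i))) \<in> borel_measurable ((lborel::(real^'n) measure) \<Otimes>\<^sub>M lborel)"
      unfolding F_def by measurable
  qed
  also have "\<dots> < \<infinity>"
    using main_bound[of F, OF Fmeas Fnn Ffin] by (simp add: ennreal_mult_less_top)
  finally show ?thesis using \<delta>(1) by blast
qed


end
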